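(* Let $n \geq 1$ and $0 \le k \le n$. The number of Grassmannian permutations of $[n]$ with exactly $k$ fixed points is $1$ if $k = n$, $0$ if $k = n-1$, and $(k+1)2^{n-k-2}$ if $0 \le k \le n-2$.
   Context: A permutation $\pi = \pi_1\cdots\pi_n$ of $[n]=\{1,\dots,n\}$ (written in one-line notation) is Grassmannian if it has at most one descent, i.e. at most one index $i$ with $\pi_i > \pi_{i+1}$. A fixed point of $\pi$ is an $i \in [n]$ with $\pi_i = i$. *)

theory Defs
  imports "HOL-Combinatorics.Permutations"
begin

definition descents :: "nat \<Rightarrow> (nat \<Rightarrow> nat) \<Rightarrow> nat set" where
  "descents n \<pi> = {i. 1 \<le> i \<and> i < n \<and> \<pi> i > \<pi> (Suc i)}"

definition grassmannian :: "nat \<Rightarrow> (nat \<Rightarrow> nat) \<Rightarrow> bool" where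
  "grassmannian n \<pi> \<longleftrightarrow> card (descents n \<pi>) \<le> 1"

definition fixed_points :: "nat \<Rightarrow> (nat \<Rightarrow> nat) \<Rightarrow> nat set" where
  "fixed_points n \<pi> = {i \<in> {1..n}. \<pi> i = i}"

end

theory Submission imports Defs
begin

definition sig :: "nat \<Rightarrow> nat set \<Rightarrow> nat \<Rightarrow> nat" where
"sig n S j = (if j \<in> {1..n} then (if j \<in> S then card {x\<in>S. x \<le> j}
   else card S + card {x\<in>{1..n} - S. x \<le> j}) else j)"

lemma sig_out: "j \<notin> {1..n} \<Longrightarrow> sig n S j = j"
  unfolding sig_def by (rule if_not_P)

lemma sig_S:
  assumes "S \<subseteq> {1..n}" "j \<in> S"
  shows "1 \<le> sig n S j" "sig n S j \<le> card S"
proof -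
  have fin: "finite S" using assms finite_subset by blast
  have "j \<in> {1..n}" using assms by auto
  then have e: "sig n S j = card {x\<in>S. x \<le> j}" using assms by (simp add: sig_def)
  have "finite {x\<in>S. x \<le> j}" using fin by simp
  moreover have "j \<in> {x\<in>S. x \<le> j}" using assms by auto
  ultimately have "card {x\<in>S. x \<le> j} > 0" using card_gt_0_iff by blast
  then show "1 \<le> sig n S j" unfolding e by simp
  show "sig n S j \<le> card S" unfolding e using fin by (intro card_mono) auto
qed

lemma sig_nS:
  assumes "S \<subseteq> {1..n}" "j \<in> {1..n}" "j \<notin> S"
  shows "card S < sig n S j" "sig n S j \<le> n"
proof -
  have fin: "finite S" using assms finite_subset by blast
  have e: "sig n S j = card S + card {x\<in>{1..n} - S. x \<le> j}" using assms by (simp add: sig_def)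
  have "j \<in> {x\<in>{1..n} - S. x \<le> j}" using assms by auto
  moreover have "finite {x\<in>{1..n} - S. x \<le> j}" by simp
  ultimately have "card {x\<in>{1..n} - S. x \<le> j} > 0" using card_gt_0_iff by blast
  then show "card S < sig n S j" unfolding e by simp
  have "card {x\<in>{1..n} - S. x \<le> j} \<le> card ({1..n} - S)" by (intro card_mono) auto
  also have "\<dots> = n - card S" using assms fin by (simp add: card_Diff_subset)
  finally show "sig n S j \<le> n" unfolding e using card_mono[OF _ assms(1)] by simp
qed

lemma sig_mono_S:
  assumes "S \<subseteq> {1..n}" "x \<in> S" "y \<in> S" "x < y"
  shows "sig n S x < sig n S y"
proof -
  have fin: "finite S" using assms finite_subset by blast
  have "x \<in> {1..n}" "y \<in> {1..n}" using assms by auto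
  then have "sig n S x = card {z\<in>S. z \<le> x}" "sig n S y = card {z\<in>S. z \<le> y}"
    using assms by (simp_all add: sig_def)
  moreover have "{z\<in>S. z \<le> x} \<subset> {z\<in>S. z \<le> y}"
  proof -
    have "{z\<in>S. z \<le> x} \<subseteq> {z\<in>S. z \<le> y}" using assms by auto
    moreover have "y \<in> {z\<in>S. z \<le> y}" "y \<notin> {z\<in>S. z \<le> x}" using assms by auto
    ultimately show ?thesis by blast
  qed
  ultimately show ?thesis using fin psubset_card_mono[of "{z\<in>S. z \<le> y}" "{z\<in>S. z \<le> x}"] by simp
qed

lemma sig_mono_nS:
  assumes "S \<subseteq> {1..n}" "x \<in> {1..n}-S" "y \<in> {1..n}-S" "x < y"
  shows "sig n S x < sig n S y"
proof -
  have "sig n S x = card S + card {z\<in>{1..n}-S. z \<le> x}" "sig n S y = card S + card {z\<in>{1..n}-S. z \<le> y}"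
    using assms by (simp_all add: sig_def)
  moreover have "{z\<in>{1..n}-S. z \<le> x} \<subset> {z\<in>{1..n}-S. z \<le> y}"
  proof -
    have "{z\<in>{1..n}-S. z \<le> x} \<subseteq> {z\<in>{1..n}-S. z \<le> y}" using assms by auto
    moreover have "y \<in> {z\<in>{1..n}-S. z \<le> y}" "y \<notin> {z\<in>{1..n}-S. z \<le> x}" using assms by auto
    ultimately show ?thesis by blast
  qed
  ultimately show ?thesis using psubset_card_mono[of "{z\<in>{1..n}-S. z \<le> y}" "{z\<in>{1..n}-S. z \<le> x}"] by simp
qed

lemma sig_neq:
  assumes "S \<subseteq> {1..n}" "x \<in> {1..n}" "y \<in> {1..n}" "x < y"
  shows "sig n S x \<noteq> sig n S y"
proof (cases "x \<in> S")
  case True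
  show ?thesis
  proof (cases "y \<in> S")
    case True
    then show ?thesis using sig_mono_S[OF assms(1) \<open>x \<in> S\<close> True assms(4)] by simp
  next
    case False
    then show ?thesis using sig_S(2)[OF assms(1) \<open>x \<in> S\<close>] sig_nS(1)[OF assms(1) assms(3) False] by simp
  qed
next
  case xF: False
  show ?thesis
  proof (cases "y \<in> S")
    case True
    then show ?thesis using sig_S(2)[OF assms(1) True] sig_nS(1)[OF assms(1) assms(2) xF] by simp
  next
    case False
    then show ?thesis using sig_mono_nS[OF assms(1) _ _ assms(4)] xF assms by simp
  qed
qed

lemma sig_inj:
  assumes "S \<subseteq> {1..n}"
  shows "inj_on (sig n S) {1..n}"
proof (rule inj_onI, rule ccontr)
  fix x y assume xy: "x \<in> {1..n}" "y \<in> {1..n}" "sig n S x = sig n S y" "x \<noteq> y"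
  show False
  proof (cases "x < y")
    case True
    then show ?thesis using xy sig_neq[OF assms, of x y] by simp
  next
    case False
    then have "y < x" using xy by simp
    then show ?thesis using xy sig_neq[OF assms, of y x] by simp
  qed
qed

lemma sig_permutes:
  assumes "S \<subseteq> {1..n}"
  shows "sig n S permutes {1..n}"
proof (rule inj_imp_permutes[OF sig_inj[OF assms]])
  fix x assume "x \<in> {1..n}"
  have c: "card S \<le> n" using card_mono[OF _ assms] by simp
  show "sig n S x \<in> {1..n}"
  proof (cases "x \<in> S")
    case True then show ?thesis using sig_S[OF assms True] c by simp
  next
    case False then show ?thesis using sig_nS[OF assms \<open>x \<in> {1..n}\<close> False] by simp
  qed
qed (auto simp: sig_def)

lemma sig_fix_S:
  assumes "S \<subseteq> {1..n}" "j \<in> S"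
  shows "sig n S j = j \<longleftrightarrow> {1..j} \<subseteq> S"
proof -
  have "j \<in> {1..n}" using assms by auto
  then have e: "sig n S j = card {x\<in>S. x \<le> j}" using assms by (simp add: sig_def)
  have sub: "{x\<in>S. x \<le> j} \<subseteq> {1..j}" using assms by auto
  show ?thesis
  proof
    assume "sig n S j = j"
    then have "card {x\<in>S. x \<le> j} = card {1..j}" using e by simp
    then have "{x\<in>S. x \<le> j} = {1..j}" using sub by (simp add: card_subset_eq)
    then show "{1..j} \<subseteq> S" by blast
  next
    assume "{1..j} \<subseteq> S"
    then have "{x\<in>S. x \<le> j} = {1..j}" using sub by auto
    then show "sig n S j = j" using e by simp
  qed
qed

lemma sig_fix_nS:
  assumes "S \<subseteq> {1..n}" "j \<in> {1..n}" "j \<notin> S"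
  shows "sig n S j = j \<longleftrightarrow> S \<subseteq> {..<j}"
proof -
  have fin: "finite S" using assms finite_subset by blast
  have e: "sig n S j = card S + card {x\<in>{1..n} - S. x \<le> j}" using assms by (simp add: sig_def)
  have "{1..j} = {x\<in>{1..n} - S. x \<le> j} \<union> {x\<in>S. x \<le> j}" using assms by auto
  then have "card {1..j} = card {x\<in>{1..n} - S. x \<le> j} + card {x\<in>S. x \<le> j}"
    using fin by (simp add: card_Un_disjoint disjoint_iff)
  then have "j = card {x\<in>{1..n} - S. x \<le> j} + card {x\<in>S. x \<le> j}" by simp
  then have "sig n S j = j \<longleftrightarrow> card S = card {x\<in>S. x \<le> j}" using e by linarith
  also have "\<dots> \<longleftrightarrow> S = {x\<in>S. x \<le> j}"
  proof
    assume "card S = card {x\<in>S. x \<le> j}"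
    then show "S = {x\<in>S. x \<le> j}" using fin by (intro card_subset_eq[symmetric]) auto
  qed auto
  also have "\<dots> \<longleftrightarrow> S \<subseteq> {..<j}"
  proof
    assume h: "S = {x\<in>S. x \<le> j}"
    show "S \<subseteq> {..<j}"
    proof
      fix x assume "x \<in> S"
      then have "x \<le> j" using h by blast
      moreover have "x \<noteq> j" using \<open>x \<in> S\<close> assms(3) by blast
      ultimately show "x \<in> {..<j}" by simp
    qed
  next
    assume "S \<subseteq> {..<j}" then show "S = {x\<in>S. x \<le> j}" by auto
  qed
  finally show ?thesis .
qed

lemma sig_empty: "sig n {} = id"
proof (rule ext)
  fix x show "sig n {} x = id x"
  proof (cases "x \<in> {1..n}")
    case True
    then have "{xa \<in> {1..n} - {}. xa \<le> x} = {1..x}" by auto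
    then show ?thesis using True by (simp add: sig_def)
  next
    case False then show ?thesis unfolding sig_def by (simp only: if_False) simp
  qed
qed


definition gp :: "nat \<Rightarrow> nat set \<Rightarrow> nat \<Rightarrow> nat" where
  "gp n S = inv (sig n S)"

lemma gp_permutes: "S \<subseteq> {1..n} \<Longrightarrow> gp n S permutes {1..n}"
  unfolding gp_def by (rule permutes_inv[OF sig_permutes])

lemma sig_gp: "S \<subseteq> {1..n} \<Longrightarrow> sig n S (gp n S i) = i"
  unfolding gp_def using permutes_inverses(1)[OF sig_permutes] by blast

lemma gp_desc:
  assumes S: "S \<subseteq> {1..n}"
  shows "descents n (gp n S) \<subseteq> {card S}"
proof
  fix i assume i: "i \<in> descents n (gp n S)"
  show "i \<in> {card S}"
  proof (rule ccontr)
    assume ne: "i \<notin> {card S}"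
    define u where "u = gp n S i"
    define v where "v = gp n S (Suc i)"
    have i1: "1 \<le> i" "i < n" and vu: "v < u" using i by (auto simp: descents_def u_def v_def)
    have "i \<in> {1..n}" "Suc i \<in> {1..n}" using i1 by auto
    then have un: "u \<in> {1..n}" "v \<in> {1..n}" unfolding u_def v_def
      using permutes_in_image[OF gp_permutes[OF S]] by blast+
    have su: "sig n S u = i" "sig n S v = Suc i" using sig_gp[OF S] u_def v_def by auto
    show False
    proof (cases "i < card S")
      case True
      have "u \<in> S" using sig_nS(1)[OF S un(1)] su True by (cases "u \<in> S") auto
      moreover have "v \<in> S" using sig_nS(1)[OF S un(2)] su True by (cases "v \<in> S") auto
      ultimately show False using sig_mono_S[OF S _ _ vu] su by simp
    next
      case False
      then have "card S < i" using ne by simp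
      have "u \<notin> S"
      proof
        assume "u \<in> S" then have "sig n S u \<le> card S" by (rule sig_S(2)[OF S])
        then show False using su \<open>card S < i\<close> by simp
      qed
      moreover have "v \<notin> S"
      proof
        assume "v \<in> S" then have "sig n S v \<le> card S" by (rule sig_S(2)[OF S])
        then show False using su \<open>card S < i\<close> by simp
      qed
      ultimately show False using sig_mono_nS[OF S _ _ vu] su un by simp
    qed
  qed
qed

lemma gp_grass:
  assumes S: "S \<subseteq> {1..n}"
  shows "grassmannian n (gp n S)"
  unfolding grassmannian_def using card_mono[OF _ gp_desc[OF S]] by simp

lemma gp_fix:
  assumes S: "S \<subseteq> {1..n}"
  shows "fixed_points n (gp n S) = {j\<in>{1..n}. sig n S j = j}"
  unfolding fixed_points_def gp_def using permutes_inv_eq[OF sig_permutes[OF S]] by auto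

lemma no_desc_lt:
  assumes p: "p permutes {1..n}" and "1 \<le> i" "i < n" "i \<notin> descents n p"
  shows "p i < p (Suc i)"
proof -
  have "\<not> p i > p (Suc i)" using assms by (auto simp: descents_def)
  moreover have "p i \<noteq> p (Suc i)" using permutes_inj[OF p] by (metis injD n_not_Suc_n)
  ultimately show ?thesis by simp
qed

lemma chain_mono:
  assumes "\<forall>i. a \<le> i \<and> i < b \<longrightarrow> f i < (f (Suc i) :: nat)"
  shows "a \<le> i \<Longrightarrow> i < j \<Longrightarrow> j \<le> b \<Longrightarrow> f i < f j"
proof (induction j)
  case 0 then show ?case by linarith
next
  case (Suc j)
  show ?case
  proof (cases "i = j")
    case True then show ?thesis using assms Suc.prems by auto
  next
    case False
    then have "f i < f j" using Suc by simp
    also have "f j < f (Suc j)" using assms Suc.prems False by auto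
    finally show ?thesis .
  qed
qed

lemma block_count:
  fixes f :: "nat \<Rightarrow> nat"
  assumes inj: "inj_on f {a..b}" and mono: "\<And>i j. a \<le> i \<Longrightarrow> i < j \<Longrightarrow> j \<le> b \<Longrightarrow> f i < f j"
    and i: "a \<le> i" "i \<le> b"
  shows "card {x \<in> f ` {a..b}. x \<le> f i} = Suc i - a"
proof -
  have "{x \<in> f ` {a..b}. x \<le> f i} = f ` {a..i}"
  proof
    show "{x \<in> f ` {a..b}. x \<le> f i} \<subseteq> f ` {a..i}"
    proof
      fix x assume "x \<in> {x \<in> f ` {a..b}. x \<le> f i}"
      then obtain i' where i': "i' \<in> {a..b}" "x = f i'" "f i' \<le> f i" by auto
      have "i' \<le> i"
      proof (rule ccontr)
        assume "\<not> i' \<le> i" then have "f i < f i'" using mono i i' by auto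
        then show False using i' by simp
      qed
      then show "x \<in> f ` {a..i}" using i' by auto
    qed
  next
    show "f ` {a..i} \<subseteq> {x \<in> f ` {a..b}. x \<le> f i}"
    proof
      fix x assume "x \<in> f ` {a..i}"
      then obtain i' where i': "i' \<in> {a..i}" "x = f i'" by auto
      have "f i' \<le> f i" using mono[of i' i] i i' by (cases "i' = i") auto
      then show "x \<in> {x \<in> f ` {a..b}. x \<le> f i}" using i' i by auto
    qed
  qed
  moreover have "inj_on f {a..i}" using inj_on_subset[OF inj] i by auto
  ultimately show ?thesis by (simp add: card_image)
qed


lemma gp_repr:
  assumes p: "p permutes {1..n}" and D: "D \<le> n"
    and inc: "\<forall>i. 1 \<le> i \<and> i < n \<and> i \<noteq> D \<longrightarrow> p i < p (Suc i)"
  shows "p = gp n (p ` {1..D})"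
proof -
  define S where "S = p ` {1..D}"
  have S: "S \<subseteq> {1..n}"
  proof
    fix x assume "x \<in> S" then obtain i where "i \<in> {1..D}" "x = p i" by (auto simp: S_def)
    then show "x \<in> {1..n}" using permutes_in_image[OF p, of i] D by auto
  qed
  have injp: "inj_on p X" for X using permutes_inj_on[OF p] .
  have m1: "p i < p j" if "1 \<le> i" "i < j" "j \<le> D" for i j
    by (rule chain_mono[of 1 D p]) (use inc D that in auto)
  have m2: "p i < p j" if "Suc D \<le> i" "i < j" "j \<le> n" for i j
    by (rule chain_mono[of "Suc D" n p]) (use inc that in auto)
  have cS: "card S = D" unfolding S_def using card_image[OF injp] by simp
  have un: "{1..n} = {1..D} \<union> {Suc D..n}" using D by auto
  have "p ` {1..n} = S \<union> p ` {Suc D..n}" unfolding S_def by (subst un) (rule image_Un)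
  then have img: "{1..n} = S \<union> p ` {Suc D..n}" using permutes_image[OF p] by simp
  have "p ` ({1..D} \<inter> {Suc D..n}) = S \<inter> p ` {Suc D..n}"
    unfolding S_def by (rule inj_on_image_Int[OF injp[of UNIV]]) auto
  moreover have "{1..D} \<inter> {Suc D..n} = {}" by auto
  ultimately have dis: "S \<inter> p ` {Suc D..n} = {}" by (metis image_empty)
  have comp: "{1..n} - S = p ` {Suc D..n}" using img dis by blast
  have key: "sig n S (p i) = i" for i
  proof (cases "i \<in> {1..n}")
    case True
    then have pin: "p i \<in> {1..n}" using permutes_in_image[OF p] by blast
    show ?thesis
    proof (cases "i \<le> D")
      case True
      then have "p i \<in> S" using \<open>i \<in> {1..n}\<close> by (auto simp: S_def)
      then have "sig n S (p i) = card {x\<in>S. x \<le> p i}" using pin by (simp add: sig_def)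
      also have "\<dots> = Suc i - 1" unfolding S_def
        by (rule block_count[OF injp m1]) (use True \<open>i \<in> {1..n}\<close> in auto)
      finally show ?thesis by simp
    next
      case False
      have "p i \<notin> S"
      proof
        assume "p i \<in> S"
        then have "i \<in> {1..D}" unfolding S_def using inj_image_mem_iff[OF permutes_inj[OF p]] by blast
        then show False using False by simp
      qed
      then have "sig n S (p i) = card S + card {x\<in>{1..n} - S. x \<le> p i}" using pin by (simp add: sig_def)
      also have "card {x\<in>{1..n} - S. x \<le> p i} = Suc i - Suc D" unfolding comp
        by (rule block_count[OF injp m2]) (use False \<open>i \<in> {1..n}\<close> in auto)
      finally show ?thesis using cS False by simp
    qed
  next
    case False
    then have "p i = i" using permutes_not_in[OF p] by blast
    then show ?thesis using sig_out[OF False] by simp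
  qed
  show ?thesis
  proof (rule ext)
    fix x
    have "inv (sig n S) x = p x" using permutes_inv_eq[OF sig_permutes[OF S]] key by simp
    then show "p x = gp n (p ` {1..D}) x" unfolding gp_def S_def by simp
  qed
qed

lemma grass_repr:
  assumes p: "p permutes {1..n}" and g: "grassmannian n p"
  shows "\<exists>S. S \<subseteq> {1..n} \<and> p = gp n S"
proof -
  have fin: "finite (descents n p)"
    by (rule finite_subset[of _ "{1..<n}"]) (auto simp: descents_def)
  obtain D where D: "D \<le> n" "\<forall>i. 1 \<le> i \<and> i < n \<and> i \<noteq> D \<longrightarrow> p i < p (Suc i)"
  proof (cases "card (descents n p) = 0")
    case True
    then have "descents n p = {}" using fin by simp
    then show ?thesis using no_desc_lt[OF p] that[of 0] by simp
  next
    case False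
    then have "card (descents n p) = 1" using g by (simp add: grassmannian_def)
    then obtain D where "descents n p = {D}" using card_1_singletonE by blast
    moreover then have "D < n" by (auto simp: descents_def)
    ultimately show ?thesis using no_desc_lt[OF p] that[of D] by auto
  qed
  have "p ` {1..D} \<subseteq> {1..n}"
  proof
    fix x assume "x \<in> p ` {1..D}" then obtain i where "i \<in> {1..D}" "x = p i" by auto
    then show "x \<in> {1..n}" using permutes_in_image[OF p, of i] D(1) by auto
  qed
  then show ?thesis using gp_repr[OF p D] by blast
qed

lemma gp_empty: "gp n {} = id"
  unfolding gp_def sig_empty by simp

lemma S_from_sig:
  assumes S: "S \<subseteq> {1..n}"
  shows "S = {j\<in>{1..n}. sig n S j \<le> card S}"
proof
  show "S \<subseteq> {j\<in>{1..n}. sig n S j \<le> card S}" using S sig_S(2)[OF S] by auto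
  show "{j\<in>{1..n}. sig n S j \<le> card S} \<subseteq> S"
  proof
    fix j assume "j \<in> {j\<in>{1..n}. sig n S j \<le> card S}"
    then show "j \<in> S" using sig_nS(1)[OF S, of j] by (cases "j \<in> S") auto
  qed
qed


definition X :: "nat \<Rightarrow> nat \<Rightarrow> nat \<Rightarrow> nat set set" where
  "X n a b = {S. S \<subseteq> {1..n} \<and> a + b + 2 \<le> n \<and> {1..a} \<subseteq> S \<and> Suc a \<notin> S \<and> n - b \<in> S
     \<and> (\<forall>j. n - b < j \<longrightarrow> j \<notin> S)}"

lemma X_fix:
  assumes "S \<in> X n a b"
  shows "{j\<in>{1..n}. sig n S j = j} = {1..a} \<union> {n-b<..n}"
proof -
  have S: "S \<subseteq> {1..n}" and ab: "a + b + 2 \<le> n" and A: "{1..a} \<subseteq> S" and sa: "Suc a \<notin> S"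
    and nb: "n - b \<in> S" and B: "\<forall>j. n - b < j \<longrightarrow> j \<notin> S" using assms by (auto simp: X_def)
  have "j \<in> {j\<in>{1..n}. sig n S j = j} \<longleftrightarrow> j \<in> {1..a} \<union> {n-b<..n}" for j
  proof (cases "j \<in> {1..n}")
    case jn: True
    show ?thesis
    proof (cases "j \<in> S")
      case True
      have "j \<le> n - b" using B True by (meson not_le)
      have "sig n S j = j \<longleftrightarrow> {1..j} \<subseteq> S" by (rule sig_fix_S[OF S True])
      also have "\<dots> \<longleftrightarrow> j \<le> a"
      proof
        assume h: "{1..j} \<subseteq> S" show "j \<le> a"
        proof (rule ccontr)
          assume "\<not> j \<le> a" then have "Suc a \<in> {1..j}" by simp
          then show False using h sa by blast
        qed
      next
        assume "j \<le> a" then show "{1..j} \<subseteq> S" using A by auto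
      qed
      finally show ?thesis using jn \<open>j \<le> n - b\<close> by auto
    next
      case False
      have "j \<notin> {1..a}" using A False by blast
      have "sig n S j = j \<longleftrightarrow> S \<subseteq> {..<j}" by (rule sig_fix_nS[OF S jn False])
      also have "\<dots> \<longleftrightarrow> n - b < j"
      proof
        assume "S \<subseteq> {..<j}" then show "n - b < j" using nb by auto
      next
        assume h: "n - b < j"
        show "S \<subseteq> {..<j}"
        proof
          fix x assume "x \<in> S" then have "x \<le> n - b" using B by (meson not_le)
          then show "x \<in> {..<j}" using h by simp
        qed
      qed
      finally show ?thesis using jn \<open>j \<notin> {1..a}\<close> by auto
    qed
  next
    case False
    then show ?thesis using ab by auto
  qed
  then show ?thesis by blast
qed

lemma X_fix_card:
  assumes "S \<in> X n a b"
  shows "card {j\<in>{1..n}. sig n S j = j} = a + b"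
proof -
  have ab: "a + b + 2 \<le> n" using assms by (auto simp: X_def)
  have "{1..a} \<inter> {n-b<..n} = {}" using ab by auto
  then have "card ({1..a} \<union> {n-b<..n}) = a + b" using ab by (simp add: card_Un_disjoint)
  then show ?thesis using X_fix[OF assms] by simp
qed

lemma X_sub: "S \<in> X n a b \<Longrightarrow> S \<subseteq> {1..n}" by (simp add: X_def)

lemma X_desc:
  assumes SX: "S \<in> X n a b"
  shows "descents n (gp n S) = {card S}"
proof -
  have S: "S \<subseteq> {1..n}" and ab: "a + b + 2 \<le> n" and sa: "Suc a \<notin> S"
    and nb: "n - b \<in> S" using SX by (auto simp: X_def)
  have "descents n (gp n S) \<noteq> {}"
  proof
    assume e: "descents n (gp n S) = {}"
    have "\<forall>i. 1 \<le> i \<and> i < n \<and> i \<noteq> 0 \<longrightarrow> gp n S i < gp n S (Suc i)"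
      using no_desc_lt[OF gp_permutes[OF S]] e by simp
    then have "gp n S = gp n (gp n S ` {1..0})" by (rule gp_repr[OF gp_permutes[OF S] le0])
    then have "gp n S = id" using gp_empty by simp
    then have "sig n S = id" using permutes_inv_inv[OF sig_permutes[OF S]] unfolding gp_def
      by (metis inv_id)
    then have "sig n S (n - b) = n - b" by simp
    then have "{1..n-b} \<subseteq> S" using sig_fix_S[OF S nb] by simp
    moreover have "Suc a \<in> {1..n-b}" using ab by auto
    ultimately show False using sa by blast
  qed
  then show ?thesis using gp_desc[OF S] by blast
qed

lemma X_inj:
  "inj_on (gp n) (\<Union>a\<in>A. X n a (k - a))"
proof (rule inj_onI)
  fix S S' assume s1: "S \<in> (\<Union>a\<in>A. X n a (k - a))" and s2: "S' \<in> (\<Union>a\<in>A. X n a (k - a))"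
    and eq: "gp n S = gp n S'"
  obtain a a' where A: "S \<in> X n a (k - a)" "S' \<in> X n a' (k - a')" using s1 s2 by blast
  have c: "card S = card S'" using X_desc[OF A(1)] X_desc[OF A(2)] eq by simp
  have "sig n S = inv (gp n S)" using permutes_inv_inv[OF sig_permutes[OF X_sub[OF A(1)]]] by (simp add: gp_def)
  also have "\<dots> = sig n S'" using permutes_inv_inv[OF sig_permutes[OF X_sub[OF A(2)]]] eq by (simp add: gp_def)
  finally have "sig n S = sig n S'" .
  then show "S = S'" using S_from_sig[OF X_sub[OF A(1)]] S_from_sig[OF X_sub[OF A(2)]] c by simp
qed

lemma X_img:
  assumes ab: "a + b + 2 \<le> n"
  shows "X n a b = (\<lambda>U. {1..a} \<union> {n-b} \<union> U) ` Pow {Suc (Suc a)..<n-b}"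
proof
  show "X n a b \<subseteq> (\<lambda>U. {1..a} \<union> {n-b} \<union> U) ` Pow {Suc (Suc a)..<n-b}"
  proof
    fix S assume SX: "S \<in> X n a b"
    have S: "S \<subseteq> {1..n}" and A: "{1..a} \<subseteq> S" and sa: "Suc a \<notin> S"
      and nb: "n - b \<in> S" and B: "\<forall>j. n - b < j \<longrightarrow> j \<notin> S" using SX by (auto simp: X_def)
    have "S = {1..a} \<union> {n-b} \<union> (S \<inter> {Suc (Suc a)..<n-b})"
    proof
      show "S \<subseteq> {1..a} \<union> {n-b} \<union> (S \<inter> {Suc (Suc a)..<n-b})"
      proof
        fix x assume x: "x \<in> S"
        then have "1 \<le> x" using S by auto
        moreover have "x \<le> n - b" using B x by (meson not_le)
        moreover have "x \<noteq> Suc a" using x sa by blast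
        ultimately show "x \<in> {1..a} \<union> {n-b} \<union> (S \<inter> {Suc (Suc a)..<n-b})" using x by auto
      qed
    qed (use A nb in auto)
    then show "S \<in> (\<lambda>U. {1..a} \<union> {n-b} \<union> U) ` Pow {Suc (Suc a)..<n-b}" by blast
  qed
next
  show "(\<lambda>U. {1..a} \<union> {n-b} \<union> U) ` Pow {Suc (Suc a)..<n-b} \<subseteq> X n a b"
  proof
    fix S assume "S \<in> (\<lambda>U. {1..a} \<union> {n-b} \<union> U) ` Pow {Suc (Suc a)..<n-b}"
    then obtain U where U: "U \<subseteq> {Suc (Suc a)..<n-b}" "S = {1..a} \<union> {n-b} \<union> U" by auto
    have Ux: "\<forall>x\<in>U. Suc (Suc a) \<le> x \<and> x < n - b" using U(1) by auto
    show "S \<in> X n a b" unfolding X_def using U(2) Ux ab by auto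
  qed
qed

lemma card_X:
  assumes ab: "a + b + 2 \<le> n"
  shows "card (X n a b) = 2 ^ (n - a - b - 2)"
proof -
  have inj: "inj_on (\<lambda>U. {1..a} \<union> {n-b} \<union> U) (Pow {Suc (Suc a)..<n-b})"
  proof (rule inj_onI)
    fix U V assume "U \<in> Pow {Suc (Suc a)..<n-b}" "V \<in> Pow {Suc (Suc a)..<n-b}"
      and e: "{1..a} \<union> {n-b} \<union> U = {1..a} \<union> {n-b} \<union> V"
    then have "\<forall>x\<in>U. Suc (Suc a) \<le> x \<and> x < n - b" "\<forall>x\<in>V. Suc (Suc a) \<le> x \<and> x < n - b" by auto
    then have "U = ({1..a} \<union> {n-b} \<union> U) \<inter> {Suc (Suc a)..<n-b}"
      "V = ({1..a} \<union> {n-b} \<union> V) \<inter> {Suc (Suc a)..<n-b}" by auto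
    then show "U = V" using e by metis
  qed
  have "card (X n a b) = card (Pow {Suc (Suc a)..<n-b})"
    unfolding X_img[OF ab] by (rule card_image[OF inj])
  also have "\<dots> = 2 ^ (n - b - Suc (Suc a))" by (simp add: card_Pow)
  finally show ?thesis by simp
qed

lemma X_empty: "\<not> a + b + 2 \<le> n \<Longrightarrow> X n a b = {}"
  by (simp add: X_def)

lemma X_disj:
  assumes "a \<noteq> a'"
  shows "X n a b \<inter> X n a' b' = {}"
proof (rule ccontr)
  assume "X n a b \<inter> X n a' b' \<noteq> {}"
  then obtain S where "S \<in> X n a b" "S \<in> X n a' b'" by blast
  then have "{1..a} \<subseteq> S" "Suc a \<notin> S" "{1..a'} \<subseteq> S" "Suc a' \<notin> S" by (auto simp: X_def)
  then have h: "\<forall>x. 1 \<le> x \<and> x \<le> a \<longrightarrow> x \<in> S" "\<forall>x. 1 \<le> x \<and> x \<le> a' \<longrightarrow> x \<in> S"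
    "Suc a \<notin> S" "Suc a' \<notin> S" by auto
  show False
  proof (cases "a < a'")
    case True then show False using h(2) h(3) by auto
  next
    case False then have "a' < a" using assms by simp
    then show False using h(1) h(4) by auto
  qed
qed

lemma card_U:
  "card (\<Union>a\<in>{0..k}. X n a (k - a)) = (if k + 2 \<le> n then (k + 1) * 2 ^ (n - k - 2) else 0)"
proof -
  have fin: "finite (X n a b)" for a b
    by (rule finite_subset[of _ "Pow {1..n}"]) (auto simp: X_def)
  have "card (\<Union>a\<in>{0..k}. X n a (k - a)) = (\<Sum>a\<in>{0..k}. card (X n a (k - a)))"
    by (rule card_UN_disjoint) (use fin X_disj in auto)
  also have "\<dots> = (\<Sum>a\<in>{0..k}. (if k + 2 \<le> n then 2 ^ (n - k - 2) else 0))"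
  proof (rule sum.cong)
    fix a assume "a \<in> {0..k}"
    then have "a + (k - a) = k" by simp
    then show "card (X n a (k - a)) = (if k + 2 \<le> n then 2 ^ (n - k - 2) else 0)"
      using card_X[of a "k - a" n] X_empty[of a "k - a" n] by (simp add: diff_diff_add)
  qed simp
  finally show ?thesis by simp
qed


theorem mainTheorem1:
  fixes n k :: nat
  assumes "n \<ge> 1" and "k \<le> n"
  shows "card {\<pi>. \<pi> permutes {1..n} \<and> grassmannian n \<pi> \<and> card (fixed_points n \<pi>) = k} =
           (if k = n then 1 else if k = n - 1 then 0 else (k + 1) * 2 ^ (n - k - 2))"
proof -
  let ?P = "{\<pi>. \<pi> permutes {1..n} \<and> grassmannian n \<pi> \<and> card (fixed_points n \<pi>) = k}"
  show ?thesis
  proof (cases "k = n")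
    case True
    have "?P = {id}"
    proof
      show "?P \<subseteq> {id}"
      proof
        fix p assume "p \<in> ?P"
        then have p: "p permutes {1..n}" and c: "card (fixed_points n p) = n" using True by auto
        have sub: "fixed_points n p \<subseteq> {1..n}" by (auto simp: fixed_points_def)
        then have "fixed_points n p = {1..n}" using c by (simp add: card_subset_eq)
        then have "\<forall>i\<in>{1..n}. p i = i" by (auto simp: fixed_points_def)
        then have "p = id" using permutes_not_in[OF p] by (metis eq_id_iff)
        then show "p \<in> {id}" by simp
      qed
    next
      have "descents n id = {}" by (auto simp: descents_def)
      moreover have "fixed_points n id = {1..n}" by (auto simp: fixed_points_def)
      ultimately show "{id} \<subseteq> ?P" using True by (simp add: permutes_id grassmannian_def)
    qed
    then show ?thesis using True by simp
  next
    case False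
    then have kn: "k < n" using assms by simp
    define U where "U = (\<Union>a\<in>{0..k}. X n a (k - a))"
    have "?P = gp n ` U"
    proof
      show "gp n ` U \<subseteq> ?P"
      proof
        fix p assume "p \<in> gp n ` U"
        then obtain S a where a: "a \<in> {0..k}" and SX: "S \<in> X n a (k - a)" and pS: "p = gp n S"
          unfolding U_def by blast
        have S: "S \<subseteq> {1..n}" by (rule X_sub[OF SX])
        have "card (fixed_points n p) = k" unfolding pS gp_fix[OF S] X_fix_card[OF SX] using a by simp
        then show "p \<in> ?P" using gp_permutes[OF S] gp_grass[OF S] pS by simp
      qed
    next
      show "?P \<subseteq> gp n ` U"
      proof
        fix p assume "p \<in> ?P"
        then have p: "p permutes {1..n}" "grassmannian n p" and c: "card (fixed_points n p) = k" by auto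
        obtain S where S: "S \<subseteq> {1..n}" and pS: "p = gp n S" using grass_repr[OF p] by blast
        have cf: "card {j\<in>{1..n}. sig n S j = j} = k" using c gp_fix[OF S] pS by simp
        have ex: "\<exists>j0\<in>{1..n}. sig n S j0 \<noteq> j0"
        proof (rule ccontr)
          assume "\<not> ?thesis"
          then have "{j\<in>{1..n}. sig n S j = j} = {1..n}" by auto
          then show False using cf kn by simp
        qed
        have finS: "finite S" using S finite_subset by blast
        have Sne: "S \<noteq> {}"
        proof
          assume "S = {}" then show False using ex sig_empty by simp
        qed
        have Cne: "{1..n} - S \<noteq> {}"
        proof
          assume "{1..n} - S = {}"
          then have Sn: "S = {1..n}" using S by blast
          obtain j0 where j0: "j0 \<in> {1..n}" "sig n S j0 \<noteq> j0" using ex by blast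
          have "{1..j0} \<subseteq> S" using Sn j0(1) by auto
          then show False using sig_fix_S[OF S, of j0] j0 Sn by simp
        qed
        define m where "m = Min ({1..n} - S)"
        define M where "M = Max S"
        have m: "m \<in> {1..n}" "m \<notin> S" using Min_in[OF _ Cne] unfolding m_def by auto
        have mle: "\<And>x. x \<in> {1..n} \<Longrightarrow> x \<notin> S \<Longrightarrow> m \<le> x" unfolding m_def by (rule Min_le) auto
        have M: "M \<in> S" using Max_in[OF finS Sne] unfolding M_def .
        have Mge: "\<And>x. x \<in> S \<Longrightarrow> x \<le> M" unfolding M_def using finS by (rule Max_ge)
        have Mn: "M \<in> {1..n}" using M S by blast
        have mM: "m < M"
        proof (rule ccontr)
          assume "\<not> m < M"
          moreover have "m \<noteq> M" using m M by blast
          ultimately have Mm: "M < m" by simp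
          have "sig n S j = j" if j: "j \<in> {1..n}" for j
          proof (cases "j \<in> S")
            case True
            have "{1..j} \<subseteq> S"
            proof
              fix x assume x: "x \<in> {1..j}"
              have "j \<le> M" using Mge True by simp
              then have "x < m" using x Mm by simp
              moreover have "x \<in> {1..n}" using x j by simp
              ultimately show "x \<in> S" using mle by (meson not_le)
            qed
            then show ?thesis using sig_fix_S[OF S True] by simp
          next
            case False
            have "m \<le> j" using mle j False by simp
            then have "S \<subseteq> {..<j}" using Mge Mm by fastforce
            then show ?thesis using sig_fix_nS[OF S j False] by simp
          qed
          then show False using ex by blast
        qed
        define a where "a = m - 1"
        define b where "b = n - M"
        have SX: "S \<in> X n a b" unfolding X_def
        proof (intro CollectI conjI allI impI)
          show "S \<subseteq> {1..n}" by (rule S)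
          show "a + b + 2 \<le> n" using m Mn mM unfolding a_def b_def by simp
          show "{1..a} \<subseteq> S"
          proof
            fix x assume x: "x \<in> {1..a}"
            then have "x < m" "x \<in> {1..n}" using m unfolding a_def by auto
            then show "x \<in> S" using mle by (meson not_le)
          qed
          show "Suc a \<notin> S" using m unfolding a_def by simp
          show "n - b \<in> S" using M Mn unfolding b_def by simp
        next
          fix j assume "n - b < j"
          then have "M < j" using Mn unfolding b_def by simp
          then show "j \<notin> S" using Mge by (meson not_le)
        qed
        have "a + b = k" using X_fix_card[OF SX] cf by simp
        then have "a \<in> {0..k}" "b = k - a" by auto
        then have "S \<in> U" unfolding U_def using SX by blast
        then show "p \<in> gp n ` U" using pS by blast
      qed
    qed
    then have "card ?P = card U" using card_image[OF X_inj] unfolding U_def by simp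
    also have "\<dots> = (if k + 2 \<le> n then (k + 1) * 2 ^ (n - k - 2) else 0)" unfolding U_def by (rule card_U)
    finally show ?thesis using False kn by auto
  qed
qed

end
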